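(* Let $K:\mathbb{R}\to[0,\infty)$ be a mean continuous kernel which is variation diminishing on the line. Then its wrapped kernel $\widetilde K(e^{it})=\sum_{k\in\mathbb{Z}}K(t+2\pi k)$ is variation diminishing on the circle, i.e. $S_c(\widetilde K*f)\le S_c(f)$ for every $f\in L^1(\mathbb{S})$.
   Context: A function $K:\mathbb{R}\to[0,\infty)$ with $\int_{\mathbb{R}}K(t)\,dt=1$ is a mean continuous kernel if $2K(t)=\lim_{h\downarrow0}(K(t+h)+K(t-h))$ for all $t\in\mathbb{R}$. For reals, $S^-(x_1,\dots,x_n)$ counts the sign changes in the sequence ignoring zeros; for $g:\mathbb{R}\to\mathbb{R}$, $S^-(g)=\sup S^-(g(t_1),\dots,g(t_n))$ over all $n$ and $t_1<\dots<t_n$. $K$ is variation diminishing on the line (in the sense of Karlin) if $S^-(K*_{\mathbb{R}}g)\le S^-(g)$ for every $g$ for which the convolution $(K*_{\mathbb{R}}g)(y)=\int_{\mathbb{R}}K(y-x)g(x)\,dx$ exists. On $\mathbb{S}=\{z\in\mathbb{C}:|z|=1\}$ with $d\mu(z)=\frac{dt}{2\pi}$, $(g*f)(w)=\int_{\mathbb{S}}g(wz^{-1})f(z)\,d\mu(z)$. Cyclic sign changes: for a vector $\mathbf{x}\ne0$, $S_c(\mathbf{x})=S^-(x_j,\dots,x_n,x_1,\dots,x_{j-1},x_j)$ for any $x_j\ne0$, $S_c(0)=0$; points $z_l=e^{it_l}$ are in cyclic order if $t_1<\dots<t_n<t_1+2\pi$; for $f:\mathbb{S}\to\mathbb{R}$,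 $S_c(f)$ is the supremum of $S_c(f(z_1),\dots,f(z_n))$ over all points in cyclic order. *)

theory Defs
  imports "HOL-Analysis.Analysis"
begin

definition sign_changes :: "real list \<Rightarrow> nat" where
  "sign_changes xs = (let ys = filter (\<lambda>x. x \<noteq> 0) xs in
     card {i. Suc i < length ys \<and> ys ! i * ys ! Suc i < 0})"

definition sign_changes_fun :: "(real \<Rightarrow> real) \<Rightarrow> enat" where
  "sign_changes_fun g = (SUP ts \<in> {ts. sorted_wrt (<) ts}. enat (sign_changes (map g ts)))"

definition cyc_sign_changes :: "real list \<Rightarrow> nat" where
  "cyc_sign_changes xs = (if \<forall>x\<in>set xs. x = 0 then 0 else
     (let j = (LEAST j. j < length xs \<and> xs ! j \<noteq> 0) in
        sign_changes (drop j xs @ take j xs @ [xs ! j])))"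

definition cyc_sign_changes_fun :: "(complex \<Rightarrow> real) \<Rightarrow> enat" where
  "cyc_sign_changes_fun f = (SUP ts \<in> {ts. sorted_wrt (<) ts \<and> (ts \<noteq> [] \<longrightarrow> last ts < hd ts + 2 * pi)}.
       enat (cyc_sign_changes (map (\<lambda>t. f (cis t)) ts)))"

definition mean_continuous_kernel :: "(real \<Rightarrow> real) \<Rightarrow> bool" where
  "mean_continuous_kernel K \<longleftrightarrow> (\<forall>t. K t \<ge> 0) \<and> integrable lborel K \<and>
     (\<integral>t. K t \<partial>lborel) = 1 \<and>
     (\<forall>t. ((\<lambda>h. K (t + h) + K (t - h)) \<longlongrightarrow> 2 * K t) (at_right 0))"

definition line_conv :: "(real \<Rightarrow> real) \<Rightarrow> (real \<Rightarrow> real) \<Rightarrow> real \<Rightarrow> real" where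
  "line_conv K g y = (\<integral>x. K (y - x) * g x \<partial>lborel)"

definition line_conv_exists :: "(real \<Rightarrow> real) \<Rightarrow> (real \<Rightarrow> real) \<Rightarrow> bool" where
  "line_conv_exists K g \<longleftrightarrow> (\<forall>y. integrable lborel (\<lambda>x. K (y - x) * g x))"

definition variation_diminishing_line :: "(real \<Rightarrow> real) \<Rightarrow> bool" where
  "variation_diminishing_line K \<longleftrightarrow>
     (\<forall>g. line_conv_exists K g \<longrightarrow> sign_changes_fun (line_conv K g) \<le> sign_changes_fun g)"

definition wrapped_kernel :: "(real \<Rightarrow> real) \<Rightarrow> complex \<Rightarrow> real" where
  "wrapped_kernel K z = (\<Sum>\<^sub>\<infinity>k::int. K (Arg z + 2 * pi * of_int k))"

definition circ_conv :: "(complex \<Rightarrow> real) \<Rightarrow> (complex \<Rightarrow> real) \<Rightarrow> complex \<Rightarrow> real" where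
  "circ_conv g f w = (1 / (2 * pi)) * (LINT t:{0..2*pi}|lborel. g (w * inverse (cis t)) * f (cis t))"

definition L1_circle :: "(complex \<Rightarrow> real) \<Rightarrow> bool" where
  "L1_circle f \<longleftrightarrow> set_integrable lborel {0..2*pi} (\<lambda>t. f (cis t))"

end

theory Submission
  imports Defs "HOL-Library.Sublist"
begin



fun sc :: "real list \<Rightarrow> nat" where
  "sc (x # y # zs) = (if x * y < 0 then 1 else 0) + sc (y # zs)"
| "sc _ = 0"

lemma card_sc: "card {i. Suc i < length ys \<and> ys ! i * ys ! Suc i < 0} = sc ys"
proof (induction ys rule: sc.induct)
  case (1 x y zs)
  let ?A = "{i. Suc i < length (y # zs) \<and> (y # zs) ! i * (y # zs) ! Suc i < 0}"
  have eq: "{i. Suc i < length (x # y # zs) \<and> (x # y # zs) ! i * (x # y # zs) ! Suc i < 0}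
      = (if x * y < 0 then {0} else {}) \<union> Suc ` ?A"
    apply (auto simp: image_iff split: if_splits)
    subgoal for i by (cases i) auto
    subgoal for i by (cases i) auto
    done
  have fin: "finite ?A" by (rule finite_subset[of _ "{..<length (y#zs)}"]) auto
  show ?case using 1
    by (simp only: eq) (auto simp: card_image inj_on_def fin)
qed (auto)

lemma sign_changes_sc: "sign_changes xs = sc (filter (\<lambda>x. x \<noteq> 0) xs)"
  unfolding sign_changes_def Let_def card_sc ..

lemma sc_tri:
  assumes "x \<noteq> 0" "y \<noteq> 0" "\<forall>z\<in>set ys. z \<noteq> 0"
  shows "sc (x # ys) \<le> (if x * y < 0 then 1 else 0) + sc (y # ys)"
proof (cases ys)
  case (Cons z zs)
  with assms have "z \<noteq> 0" by auto
  with assms have "(if x * z < 0 then 1 else 0) \<le> (if x * y < 0 then 1 else 0) + (if y * z < 0 then 1 else 0::nat)"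
    by (auto simp: mult_less_0_iff)
  then show ?thesis using Cons by simp
qed simp

lemma sc_Cons_ge: "sc ys \<le> sc (y # ys)"
  by (cases ys) auto

lemma sc_subseq_aux:
  assumes "subseq xs ys" "\<forall>z\<in>set ys. z \<noteq> 0"
  shows "sc xs \<le> sc ys \<and> (\<forall>x. x \<noteq> 0 \<longrightarrow> sc (x # xs) \<le> sc (x # ys))"
  using assms
proof (induction rule: list_emb.induct)
  case (list_emb_Nil ys)
  then show ?case by (cases ys) auto
next
  case (list_emb_Cons xs ys y)
  then have IH: "sc xs \<le> sc ys" "\<And>x. x \<noteq> 0 \<Longrightarrow> sc (x # xs) \<le> sc (x # ys)" by auto
  have "sc xs \<le> sc (y # ys)" using IH(1) sc_Cons_ge order_trans by blast
  moreover have "sc (x # xs) \<le> sc (x # y # ys)" if "x \<noteq> 0" for x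
    using IH(2)[OF that] sc_tri[of x y ys] list_emb_Cons.prems that by auto
  ultimately show ?case by auto
next
  case (list_emb_Cons2 x y xs ys)
  then have IH: "sc xs \<le> sc ys" "\<And>x. x \<noteq> 0 \<Longrightarrow> sc (x # xs) \<le> sc (x # ys)" by auto
  from list_emb_Cons2 have "x = y" "y \<noteq> 0" by auto
  then show ?case using IH(2)[of y] by auto
qed

lemma sc_subseq: "subseq xs ys \<Longrightarrow> \<forall>z\<in>set ys. z \<noteq> 0 \<Longrightarrow> sc xs \<le> sc ys"
  using sc_subseq_aux by blast

lemma subseq_filter_mono: "subseq xs ys \<Longrightarrow> subseq (filter P xs) (filter P ys)"
  by (induction rule: list_emb.induct) auto

lemma sign_changes_subseq: "subseq xs ys \<Longrightarrow> sign_changes xs \<le> sign_changes ys"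
  unfolding sign_changes_sc by (rule sc_subseq) (auto intro: subseq_filter_mono)

lemma subseq_zeroing:
  "subseq (filter (\<lambda>x. x \<noteq> 0) (map (\<lambda>t. if P t then g t else 0) ts)) (filter (\<lambda>x. x \<noteq> 0) (map g ts))"
  by (induction ts) auto

lemma sign_changes_zeroing:
  "sign_changes (map (\<lambda>t. if P t then g t else 0) ts) \<le> sign_changes (map g ts)"
  unfolding sign_changes_sc by (rule sc_subseq[OF subseq_zeroing]) auto

lemma sc_append:
  "xs \<noteq> [] \<Longrightarrow> ys \<noteq> [] \<Longrightarrow> sc (xs @ ys) = sc xs + sc ys + (if last xs * hd ys < 0 then 1 else 0)"
proof (induction xs rule: sc.induct)
  case ("2_2" v)
  then show ?case by (cases ys) auto
qed auto

lemma sign_changes_append: "sign_changes (xs @ ys) \<le> sign_changes xs + sign_changes ys + 1"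
  unfolding sign_changes_sc
  by (cases "filter (\<lambda>x. x \<noteq> 0) xs = []"; cases "filter (\<lambda>x. x \<noteq> 0) ys = []") (auto simp: sc_append)

lemma sc_parity:
  "xs \<noteq> [] \<Longrightarrow> \<forall>z\<in>set xs. z \<noteq> 0 \<Longrightarrow> even (sc xs) \<longleftrightarrow> hd xs * last xs > 0"
proof (induction xs rule: sc.induct)
  case (1 x y zs)
  then have IH: "even (sc (y # zs)) \<longleftrightarrow> y * last (y # zs) > 0" by auto
  have "x \<noteq> 0" "y \<noteq> 0" "last (y#zs) \<noteq> 0" using 1(3) by auto
  then show ?case using IH by (auto simp: mult_less_0_iff zero_less_mult_iff)
next
  case ("2_2" v)
  then show ?case by (auto simp: zero_less_mult_iff)
qed auto

lemma cyc_formula: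
  assumes "\<exists>x\<in>set xs. x \<noteq> 0"
  shows "cyc_sign_changes xs = sc (filter (\<lambda>x. x \<noteq> 0) xs @ [hd (filter (\<lambda>x. x \<noteq> 0) xs)])"
proof -
  define j where "j = (LEAST j. j < length xs \<and> xs ! j \<noteq> 0)"
  obtain i where i: "i < length xs" "xs ! i \<noteq> 0" using assms by (auto simp: in_set_conv_nth)
  have jP: "j < length xs \<and> xs ! j \<noteq> 0" unfolding j_def by (rule LeastI[of _ i]) (use i in auto)
  have jmin: "\<And>k. k < j \<Longrightarrow> xs ! k = 0"
    using not_less_Least[of _ "\<lambda>j. j < length xs \<and> xs ! j \<noteq> 0"] jP unfolding j_def[symmetric]
    by (metis j_def order.strict_trans)
  have ft: "filter (\<lambda>x. x \<noteq> 0) (take j xs) = []"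
    using jmin by (auto simp: filter_empty_conv in_set_conv_nth)
  have dj: "drop j xs = xs ! j # drop (Suc j) xs" using jP by (simp add: Cons_nth_drop_Suc)
  have fx: "filter (\<lambda>x. x \<noteq> 0) xs = filter (\<lambda>x. x \<noteq> 0) (drop j xs)"
    using ft by (metis append_take_drop_id filter_append self_append_conv2)
  have hd: "hd (filter (\<lambda>x. x \<noteq> 0) xs) = xs ! j" using fx dj jP by simp
  show ?thesis using assms
    unfolding cyc_sign_changes_def j_def[symmetric] Let_def sign_changes_sc
    using fx ft hd jP by auto
qed

lemma cyc_even: "even (cyc_sign_changes xs)"
proof (cases "\<exists>x\<in>set xs. x \<noteq> 0")
  case True
  let ?z = "filter (\<lambda>x. x \<noteq> 0) xs"
  have ne: "?z \<noteq> []" using True by (auto simp: filter_empty_conv)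
  have "hd ?z \<noteq> 0" using ne using hd_in_set[OF ne] by simp
  then have "hd (?z @ [hd ?z]) * last (?z @ [hd ?z]) > 0" using ne by (auto simp: zero_less_mult_iff linorder_neq_iff)
  then show ?thesis unfolding cyc_formula[OF True] by (subst sc_parity) auto
qed (auto simp: cyc_sign_changes_def)

lemma sign_le_cyc: "sign_changes xs \<le> cyc_sign_changes xs"
proof (cases "\<exists>x\<in>set xs. x \<noteq> 0")
  case True
  let ?z = "filter (\<lambda>x. x \<noteq> 0) xs"
  have ne: "?z \<noteq> []" using True by (auto simp: filter_empty_conv)
  show ?thesis unfolding cyc_formula[OF True] sign_changes_sc using sc_append[OF ne, of "[hd ?z]"] by simp
next
  case False
  then have "filter (\<lambda>x. x \<noteq> 0) xs = []" by (auto simp: filter_empty_conv)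
  then show ?thesis unfolding sign_changes_sc by simp
qed

lemma sc_replicate:
  assumes ne: "zs \<noteq> []"
  shows "sc (concat (replicate (Suc N) zs)) + (if last zs * hd zs < 0 then 1 else 0)
        = Suc N * (sc zs + (if last zs * hd zs < 0 then 1 else 0))"
proof (induction N)
  case 0 then show ?case by simp
next
  case (Suc N)
  let ?R = "concat (replicate (Suc N) zs)"
  let ?b = "(if last zs * hd zs < 0 then 1 else 0::nat)"
  have e: "concat (replicate (Suc (Suc N)) zs) = ?R @ zs"
    by (induction N) auto
  have l: "last ?R = last zs"
    using ne by (induction N) auto
  have "?R \<noteq> []" using ne by simp
  then have "sc (?R @ zs) = sc ?R + sc zs + ?b" using sc_append[of ?R zs] ne l by simp
  then show ?case unfolding e using Suc by simp
qed

lemma sc_same_sign: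
  "list_all2 (\<lambda>a b. a * b > 0) xs ys \<Longrightarrow> sc xs = sc ys"
proof (induction xs arbitrary: ys rule: sc.induct)
  case (1 x y zs)
  then obtain a b ws where ys: "ys = a # b # ws" and ab: "x * a > 0" "y * b > 0"
    and r: "list_all2 (\<lambda>a b. a * b > 0) (y # zs) (b # ws)"
    by (auto simp: list_all2_Cons1)
  have "(x * y < 0) = (a * b < 0)" using ab by (auto simp: zero_less_mult_iff mult_less_0_iff)
  then show ?case using 1(1)[OF r] ys by simp
next
  case ("2_2" v)
  then show ?case by (auto simp: list_all2_Cons1)
next
  case "2_1" then show ?case by auto
qed




lemma sorted_bnd:
  assumes s: "sorted_wrt (<) us" and u: "u \<in> set us"
  shows "hd us \<le> u \<and> u \<le> (last us::real)"
proof -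
  have ne: "us \<noteq> []" using u by auto
  obtain x xs where us: "us = x # xs" using ne by (cases us) auto
  have 1: "hd us \<le> u" using s u unfolding us by auto
  have "us = butlast us @ [last us]" using ne by simp
  then have "\<forall>a\<in>set (butlast us). a < last us" using s by (metis sorted_wrt_append list.set_intros(1))
  moreover have "u \<in> set (butlast us) \<or> u = last us" using u ne
    by (metis append_butlast_last_id rotate1.simps(2) set_rotate1 set_ConsD set_append)
  ultimately show ?thesis using 1 by force
qed

lemma dropWhile_sorted_ge:
  "sorted_wrt (<) ts \<Longrightarrow> t \<in> set (dropWhile (\<lambda>t. t < c) ts) \<Longrightarrow> c \<le> (t::real)"
proof (induction ts)
  case (Cons x xs)
  show ?case
  proof (cases "x < c")
    case True then show ?thesis using Cons by auto
  next
    case False then show ?thesis using Cons by auto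
  qed
qed simp

lemma cyc_fun_ge:
  assumes "sorted_wrt (<) ts" "ts \<noteq> [] \<Longrightarrow> last ts < hd ts + 2 * pi"
  shows "enat (cyc_sign_changes (map (\<lambda>t. f (cis t)) ts)) \<le> cyc_sign_changes_fun f"
  unfolding cyc_sign_changes_fun_def by (rule SUP_upper) (use assms in auto)

lemma block:
  assumes C: "\<forall>ts. sorted_wrt (<) ts \<longrightarrow> (ts \<noteq> [] \<longrightarrow> last ts < hd ts + 2 * pi) \<longrightarrow>
     cyc_sign_changes (map (\<lambda>t. f (cis t)) ts) \<le> c0"
  shows "sorted_wrt (<) ts \<Longrightarrow> \<forall>t\<in>set ts. a \<le> t \<and> t < a + 2*pi*real B \<Longrightarrow>
     sign_changes (map (\<lambda>t. if P t then f (cis t) else 0) ts) \<le> B * (c0 + 1)"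
proof (induction B arbitrary: a ts)
  case 0
  then have "ts = []" by (cases ts) auto
  then show ?case by (simp add: sign_changes_def)
next
  case (Suc B)
  let ?g = "\<lambda>t. if P t then f (cis t) else 0"
  define ts1 where "ts1 = takeWhile (\<lambda>t. t < a + 2*pi) ts"
  define ts2 where "ts2 = dropWhile (\<lambda>t. t < a + 2*pi) ts"
  have ts: "ts = ts1 @ ts2" unfolding ts1_def ts2_def by simp
  have s1: "sorted_wrt (<) ts1" and s2: "sorted_wrt (<) ts2"
    using Suc.prems(1) unfolding ts by (auto simp: sorted_wrt_append)
  have in1: "\<forall>t\<in>set ts1. a \<le> t \<and> t < a + 2*pi"
    using Suc.prems(2) unfolding ts1_def by (auto dest: set_takeWhileD)
  have in2: "\<forall>t\<in>set ts2. a + 2*pi \<le> t \<and> t < a + 2*pi + 2*pi*real B"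
  proof
    fix t assume t: "t \<in> set ts2"
    have "a + 2*pi \<le> t" using dropWhile_sorted_ge[OF Suc.prems(1)] t unfolding ts2_def by blast
    moreover have "t < a + 2*pi*real (Suc B)" using Suc.prems(2) t unfolding ts by auto
    ultimately show "a + 2*pi \<le> t \<and> t < a + 2*pi + 2*pi*real B" by (simp add: algebra_simps)
  qed
  have IH: "sign_changes (map ?g ts2) \<le> B * (c0 + 1)"
    using Suc.IH[OF s2] in2 by blast
  have "last ts1 < hd ts1 + 2 * pi" if ne1: "ts1 \<noteq> []"
  proof -
    have "last ts1 < a + 2*pi" using in1 last_in_set[OF ne1] by blast
    moreover have "a \<le> hd ts1" using in1 hd_in_set[OF ne1] by blast
    ultimately show ?thesis by linarith
  qed
  then have "cyc_sign_changes (map (\<lambda>t. f (cis t)) ts1) \<le> c0" using C s1 by blast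
  then have b1: "sign_changes (map ?g ts1) \<le> c0"
    using sign_changes_zeroing[of P "\<lambda>t. f (cis t)" ts1] sign_le_cyc[of "map (\<lambda>t. f (cis t)) ts1"]
    by linarith
  have "sign_changes (map ?g ts) \<le> sign_changes (map ?g ts1) + sign_changes (map ?g ts2) + 1"
    using sign_changes_append[of "map ?g ts1" "map ?g ts2"] unfolding ts by simp
  then show ?case using IH b1 by simp
qed

definition rep :: "real list \<Rightarrow> nat \<Rightarrow> real list" where
  "rep us N = concat (map (\<lambda>j. map (\<lambda>u. u + 2*pi*real j) us) [0..<N])"

lemma set_rep: "x \<in> set (rep us N) \<longleftrightarrow> (\<exists>u\<in>set us. \<exists>j<N. x = u + 2*pi*real j)"
  unfolding rep_def by (auto; blast)

lemma rep_sorted: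
  assumes s: "sorted_wrt (<) us" and ne: "us \<noteq> []" and l: "last us < hd us + 2*pi"
  shows "sorted_wrt (<) (rep us N)"
proof (induction N)
  case 0 then show ?case by (simp add: rep_def)
next
  case (Suc N)
  have e: "rep us (Suc N) = rep us N @ map (\<lambda>u. u + 2*pi*real N) us" by (simp add: rep_def)
  have bnd: "hd us \<le> u \<and> u \<le> last us" if "u \<in> set us" for u
  proof -
    obtain x xs where us: "us = x # xs" using ne by (cases us) auto
    have 1: "hd us \<le> u" using s that unfolding us by auto
    have "us = butlast us @ [last us]" using ne by simp
    then have "\<forall>a\<in>set (butlast us). a < last us" using s by (metis sorted_wrt_append list.set_intros(1))
    moreover have "u \<in> set (butlast us) \<or> u = last us" using that ne
      by (metis append_butlast_last_id rotate1.simps(2) set_rotate1 set_ConsD set_append)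
    ultimately show ?thesis using 1 by force
  qed
  have "x < v + 2*pi*real N" if xin: "x \<in> set (rep us N)" and vin: "v \<in> set us" for x v
  proof -
    obtain u j where u: "u \<in> set us" "j < N" "x = u + 2*pi*real j" using set_rep[THEN iffD1, OF xin] by blast
    have "real j + 1 \<le> real N" using u(2) by simp
    then have "2*pi*real j + 2*pi \<le> 2*pi*real N"
      using mult_left_mono[of "real j + 1" "real N" "2*pi"] by (simp add: algebra_simps)
    moreover have "u \<le> last us" using bnd[OF u(1)] by simp
    moreover have "hd us \<le> v" using bnd[OF vin] by simp
    ultimately show ?thesis using u(3) l by linarith
  qed
  then have cross: "\<forall>x\<in>set (rep us N). \<forall>y\<in>set (map (\<lambda>u. u + 2*pi*real N) us). x < y"
    by auto
  have sm: "sorted_wrt (<) (map (\<lambda>u. u + 2*pi*real N) us)"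
    unfolding sorted_wrt_map by (rule sorted_wrt_mono_rel[OF _ s]) simp
  show ?case unfolding e sorted_wrt_append using Suc.IH sm cross by blast
qed

lemma concat_replicate_snoc: "concat (replicate N xs) @ xs = xs @ concat (replicate N xs)"
  by (induction N) auto

lemma map_rep:
  assumes "\<And>u j. h (u + 2*pi*real j) = h u"
  shows "map h (rep us N) = concat (replicate N (map h us))"
proof (induction N)
  case 0 then show ?case by (simp add: rep_def)
next
  case (Suc N)
  have "map h (rep us (Suc N)) = map h (rep us N) @ map h us"
    by (simp add: rep_def assms comp_def)
  also have "\<dots> = concat (replicate N (map h us)) @ map h us" using Suc by simp
  also have "\<dots> = concat (replicate (Suc N) (map h us))"
    by (simp only: concat_replicate_snoc) simp
  finally show ?case .
qed




lemma cis_2pi_int: "cis (x + 2*pi* of_int k) = cis x"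
proof -
  have "cis (2*pi* of_int k) = 1"
    using exp_plus_2pin[of 0 k] by (simp add: cis_conv_exp algebra_simps)
  then show ?thesis by (simp add: cis_mult[symmetric])
qed

lemma cis_2pi_nat: "cis (x + 2*pi*real j) = cis x"
  using cis_2pi_int[of x "int j"] by simp

lemma Arg_cis_int: "\<exists>m::int. Arg (cis s) = s + 2*pi* of_int m"
proof -
  have "cis (Arg (cis s)) = cis s" using cis_Arg[of "cis s"] by (simp add: sgn_eq)
  then have "exp (\<i> * complex_of_real (Arg (cis s))) = exp (\<i> * complex_of_real s)"
    by (simp add: cis_conv_exp)
  then obtain n::int where n: "\<i> * complex_of_real (Arg (cis s)) = \<i> * complex_of_real s + complex_of_real (real_of_int (2 * n) * pi) * \<i>"
    unfolding exp_eq by blast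
  then have "\<i> * complex_of_real (Arg (cis s)) = \<i> * (complex_of_real s + complex_of_real (real_of_int (2 * n) * pi))"
    by (simp add: algebra_simps)
  then have "complex_of_real (Arg (cis s)) = complex_of_real s + complex_of_real (real_of_int (2 * n) * pi)"
    by simp
  then have "Arg (cis s) = s + real_of_int (2*n) * pi" by (metis of_real_add of_real_eq_iff)
  then have "Arg (cis s) = s + 2*pi * of_int n" by simp
  then show ?thesis by blast
qed

definition W :: "(real \<Rightarrow> real) \<Rightarrow> real \<Rightarrow> real" where
  "W K s = (\<Sum>\<^sub>\<infinity>k::int. K (s + 2 * pi * of_int k))"

lemma wrapped_W: "wrapped_kernel K (cis y * inverse (cis t)) = W K (y - t)"
proof -
  have e: "cis y * inverse (cis t) = cis (y - t)" by (simp add: cis_inverse cis_mult)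
  obtain m::int where m: "Arg (cis (y - t)) = (y - t) + 2*pi* of_int m" using Arg_cis_int by blast
  have "(\<Sum>\<^sub>\<infinity>k::int. K ((y - t) + 2*pi* of_int m + 2 * pi * of_int k))
      = (\<Sum>\<^sub>\<infinity>k::int. K ((y - t) + 2 * pi * of_int k))"
    by (rule infsum_reindex_bij_witness[of UNIV "\<lambda>k. k - m" "\<lambda>k. k + m"]) (auto simp: algebra_simps)
  then show ?thesis unfolding wrapped_kernel_def W_def e m .
qed




lemma ind_ceiling:
  "indicator {0..<2*pi} (c + 2*pi * of_int k - x) = (if k = \<lceil>(x - c) / (2*pi)\<rceil> then 1 else (0::real))"
proof -
  have "(0 \<le> c + 2*pi * of_int k - x \<and> c + 2*pi * of_int k - x < 2*pi) \<longleftrightarrow>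
        (of_int k - 1 < (x - c) / (2*pi) \<and> (x - c) / (2*pi) \<le> of_int k)"
    using pi_gt_zero by (auto simp: field_simps)
  moreover have "(k = \<lceil>(x - c) / (2*pi)\<rceil>) \<longleftrightarrow> (of_int k - 1 < (x - c) / (2*pi) \<and> (x - c) / (2*pi) \<le> of_int k)"
    by (metis ceiling_eq_iff)
  ultimately show ?thesis by (simp add: indicator_def)
qed

lemma ind_sum_le1:
  "(\<Sum>k\<in>S. indicator {0..<2*pi} (c + 2*pi * of_int k - x)) \<le> (1::real)"
proof (cases "finite S")
  case True
  then show ?thesis unfolding ind_ceiling by (simp add: sum.delta')
qed simp

lemma summable_ae:
  fixes K :: "real \<Rightarrow> real"
  assumes K0: "\<And>t. K t \<ge> 0" and KI: "integrable lborel K"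
  shows "AE t in lborel. t \<in> {0..<2*pi} \<longrightarrow> (\<lambda>k::int. K (c - t + 2*pi * of_int k)) summable_on UNIV"
proof -
  have Km[measurable]: "K \<in> borel_measurable borel" using borel_measurable_integrable[OF KI] by simp
  define s where "s n t = (\<Sum>k\<in>{-int n..int n}. K (c - t + 2*pi * of_int k))" for n t
  define P where "P n t = ennreal (indicator {0..<2*pi} t * s n t)" for n t
  have s0: "s n t \<ge> 0" for n t unfolding s_def by (auto intro: sum_nonneg K0)
  have Pm[measurable]: "P n \<in> borel_measurable lborel" for n unfolding P_def s_def by measurable
  have inc: "incseq P"
  proof (rule incseq_SucI, rule le_funI)
    fix n t
    have "s n t \<le> s (Suc n) t" unfolding s_def by (rule sum_mono2) (auto intro: K0)
    then show "P n t \<le> P (Suc n) t" unfolding P_def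
      by (intro ennreal_leI mult_left_mono) (auto simp: indicator_def)
  qed
  have bound: "integral\<^sup>N lborel (P n) \<le> \<integral>\<^sup>+ x. ennreal (K x) \<partial>lborel" for n
  proof -
    have "integral\<^sup>N lborel (P n) = \<integral>\<^sup>+ t. (\<Sum>k\<in>{-int n..int n}. ennreal (indicator {0..<2*pi} t * K (c - t + 2*pi * of_int k))) \<partial>lborel"
      unfolding P_def s_def
      by (subst sum_ennreal) (auto simp: sum_distrib_left indicator_def intro: K0)
    also have "\<dots> = (\<Sum>k\<in>{-int n..int n}. \<integral>\<^sup>+ t. ennreal (indicator {0..<2*pi} t * K (c - t + 2*pi * of_int k)) \<partial>lborel)"
      by (rule nn_integral_sum) measurable
    also have "\<dots> = (\<Sum>k\<in>{-int n..int n}. \<integral>\<^sup>+ x. ennreal (indicator {0..<2*pi} (c + 2*pi * of_int k - x) * K x) \<partial>lborel)"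
    proof (rule sum.cong[OF refl])
      fix k :: int
      have "\<integral>\<^sup>+ t. ennreal (indicator {0..<2*pi} t * K (c - t + 2*pi * of_int k)) \<partial>lborel
          = ennreal \<bar>-1\<bar> * \<integral>\<^sup>+ x. ennreal (indicator {0..<2*pi} ((c + 2*pi * of_int k) + (-1) * x) * K (c - ((c + 2*pi * of_int k) + (-1) * x) + 2*pi * of_int k)) \<partial>lborel"
        by (rule nn_integral_real_affine) auto
      then show "\<integral>\<^sup>+ t. ennreal (indicator {0..<2*pi} t * K (c - t + 2*pi * of_int k)) \<partial>lborel
          = \<integral>\<^sup>+ x. ennreal (indicator {0..<2*pi} (c + 2*pi * of_int k - x) * K x) \<partial>lborel"
        by simp
    qed
    also have "\<dots> = \<integral>\<^sup>+ x. (\<Sum>k\<in>{-int n..int n}. ennreal (indicator {0..<2*pi} (c + 2*pi * of_int k - x) * K x)) \<partial>lborel"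
      by (rule nn_integral_sum[symmetric]) measurable
    also have "\<dots> \<le> \<integral>\<^sup>+ x. ennreal (K x) \<partial>lborel"
    proof (rule nn_integral_mono)
      fix x
      have "(\<Sum>k\<in>{-int n..int n}. ennreal (indicator {0..<2*pi} (c + 2*pi * of_int k - x) * K x))
          = ennreal ((\<Sum>k\<in>{-int n..int n}. indicator {0..<2*pi} (c + 2*pi * of_int k - x)) * K x)"
        by (subst sum_ennreal) (auto simp: sum_distrib_right indicator_def intro: K0)
      also have "\<dots> \<le> ennreal (K x)"
        using ind_sum_le1[where S="{-int n..int n}" and c=c and x=x] K0[of x]
        by (intro ennreal_leI) (metis mult_right_mono mult_1)
      finally show "(\<Sum>k\<in>{-int n..int n}. ennreal (indicator {0..<2*pi} (c + 2*pi * of_int k - x) * K x)) \<le> ennreal (K x)" .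
    qed
    finally show ?thesis .
  qed
  have Kfin: "\<integral>\<^sup>+ x. ennreal (K x) \<partial>lborel < \<infinity>"
    using nn_integral_eq_integral[OF KI] K0 by simp
  have "integral\<^sup>N lborel (\<lambda>t. SUP n. P n t) = (SUP n. integral\<^sup>N lborel (P n))"
    by (rule nn_integral_monotone_convergence_SUP[OF inc]) simp
  also have "\<dots> \<le> \<integral>\<^sup>+ x. ennreal (K x) \<partial>lborel" by (rule SUP_least) (rule bound)
  finally have "integral\<^sup>N lborel (\<lambda>t. SUP n. P n t) \<noteq> \<infinity>" using Kfin by auto
  then have ae: "AE t in lborel. (SUP n. P n t) \<noteq> \<infinity>"
    by (intro nn_integral_PInf_AE) measurable
  show ?thesis
  proof (rule AE_mp[OF ae], rule AE_I2, intro impI)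
    fix t assume fin: "(SUP n. P n t) \<noteq> \<infinity>" and tE: "t \<in> {0..<2*pi}"
    define B where "B = enn2real (SUP n. P n t)"
    have sB: "s n t \<le> B" for n
    proof -
      have "P n t \<le> (SUP n. P n t)" by (rule SUP_upper) simp
      then have "enn2real (P n t) \<le> B" unfolding B_def using fin by (intro enn2real_mono) (simp_all add: less_top[symmetric])
      then show ?thesis using tE s0[of n t] unfolding P_def by simp
    qed
    show "(\<lambda>k::int. K (c - t + 2*pi * of_int k)) summable_on UNIV"
    proof (rule nonneg_bdd_above_summable_on)
      show "bdd_above (sum (\<lambda>k::int. K (c - t + 2*pi * of_int k)) ` {F. F \<subseteq> UNIV \<and> finite F})"
      proof (rule bdd_aboveI2)
        fix F :: "int set" assume "F \<in> {F. F \<subseteq> UNIV \<and> finite F}"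
        then have fF: "finite F" by simp
        obtain n where n: "F \<subseteq> {-int n..int n}"
        proof -
          have "finite (abs ` F)" using fF by simp
          then have "\<forall>x\<in>abs ` F. x \<le> Max (abs ` F)" by simp
          then obtain m where "\<forall>x\<in>abs ` F. x \<le> m" by blast
          then have "F \<subseteq> {-int (nat m)..int (nat m)}" by force
          then show ?thesis using that by blast
        qed
        have "sum (\<lambda>k::int. K (c - t + 2*pi * of_int k)) F \<le> s n t"
          unfolding s_def by (rule sum_mono2[OF _ n]) (auto intro: K0)
        then show "sum (\<lambda>k::int. K (c - t + 2*pi * of_int k)) F \<le> B" using sB[of n] by linarith
      qed
    qed (rule K0)
  qed
qed




definition phin :: "nat \<Rightarrow> (complex \<Rightarrow> real) \<Rightarrow> real \<Rightarrow> real" where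
  "phin n f t = (if \<bar>f (cis t)\<bar> \<le> real n then f (cis t) else 0)"

definition psi :: "nat \<Rightarrow> (complex \<Rightarrow> real) \<Rightarrow> real \<Rightarrow> real" where
  "psi n f t = indicator {0..<2*pi} t * phin n f t"

definition gfun :: "nat \<Rightarrow> nat \<Rightarrow> (complex \<Rightarrow> real) \<Rightarrow> real \<Rightarrow> real" where
  "gfun n N f x = (\<Sum>k\<in>{-int n..<int N + int n}. psi n f (x - 2*pi * of_int k))"

lemma L1_meas:
  assumes "L1_circle f"
  shows "(\<lambda>t. indicator {0..2*pi} t * f (cis t)) \<in> borel_measurable borel"
proof -
  have "integrable lborel (\<lambda>t. indicator {0..2*pi} t * f (cis t))"
    using assms by (simp add: L1_circle_def set_integrable_def)
  from borel_measurable_integrable[OF this] show ?thesis by simp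
qed

lemma psi_meas:
  assumes "L1_circle f"
  shows "psi n f \<in> borel_measurable borel"
proof -
  note m[measurable] = L1_meas[OF assms]
  have e: "psi n f = (\<lambda>t. indicator {0..<2*pi} t *
     (if \<bar>indicator {0..2*pi} t * f (cis t)\<bar> \<le> real n then indicator {0..2*pi} t * f (cis t) else 0))"
    by (rule ext) (auto simp: psi_def phin_def indicator_def)
  show ?thesis unfolding e by measurable
qed

lemma psi_bound: "\<bar>psi n f t\<bar> \<le> real n"
  by (auto simp: psi_def phin_def indicator_def)

lemma K_meas: "integrable lborel (K::real\<Rightarrow>real) \<Longrightarrow> K \<in> borel_measurable borel"
  using borel_measurable_integrable by (metis measurable_lborel2)

lemma K_shift_int: "integrable lborel (K::real\<Rightarrow>real) \<Longrightarrow> integrable lborel (\<lambda>x. K (a - x))"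
  using lborel_integrable_real_affine[of K "-1" a] by simp

lemma int_Kpsi:
  fixes K :: "real \<Rightarrow> real"
  assumes KI: "integrable lborel K" and L1: "L1_circle f"
  shows "integrable lborel (\<lambda>x. K (a - x) * psi n f (x - b))"
proof (rule Bochner_Integration.integrable_bound[where f="\<lambda>x. real n * K (a - x)"])
  show "integrable lborel (\<lambda>x. real n * K (a - x))" using K_shift_int[OF KI] by simp
  note [measurable] = K_meas[OF KI] psi_meas[OF L1]
  show "(\<lambda>x. K (a - x) * psi n f (x - b)) \<in> borel_measurable lborel" by measurable
  show "AE x in lborel. norm (K (a - x) * psi n f (x - b)) \<le> norm (real n * K (a - x))"
  proof (rule AE_I2)
    fix x
    have "\<bar>K (a - x)\<bar> * \<bar>psi n f (x - b)\<bar> \<le> \<bar>K (a - x)\<bar> * real n"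
      by (rule mult_left_mono[OF psi_bound]) simp
    then show "norm (K (a - x) * psi n f (x - b)) \<le> norm (real n * K (a - x))"
      by (simp add: abs_mult mult.commute)
  qed
qed

lemma line_conv_gfun:
  fixes K :: "real \<Rightarrow> real"
  assumes KI: "integrable lborel K" and L1: "L1_circle f"
  shows "line_conv K (gfun n N f) y =
     (\<integral>t. (\<Sum>k\<in>{-int n..<int N + int n}. K (y - 2*pi * of_int k - t)) * psi n f t \<partial>lborel)"
proof -
  let ?S = "{-int n..<int N + int n}"
  have "line_conv K (gfun n N f) y = (\<integral>x. (\<Sum>k\<in>?S. K (y - x) * psi n f (x - 2*pi * of_int k)) \<partial>lborel)"
    unfolding line_conv_def gfun_def by (simp add: sum_distrib_left)
  also have "\<dots> = (\<Sum>k\<in>?S. \<integral>x. K (y - x) * psi n f (x - 2*pi * of_int k) \<partial>lborel)"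
    by (rule Bochner_Integration.integral_sum) (rule int_Kpsi[OF KI L1])
  also have "\<dots> = (\<Sum>k\<in>?S. \<integral>t. K (y - 2*pi * of_int k - t) * psi n f t \<partial>lborel)"
  proof (rule sum.cong[OF refl])
    fix k :: int
    have "(\<integral>x. K (y - x) * psi n f (x - 2*pi * of_int k) \<partial>lborel)
       = \<bar>1\<bar> *\<^sub>R (\<integral>t. K (y - (2*pi * of_int k + 1 * t)) * psi n f ((2*pi * of_int k + 1 * t) - 2*pi * of_int k) \<partial>lborel)"
      by (rule lborel_integral_real_affine) simp
    then show "(\<integral>x. K (y - x) * psi n f (x - 2*pi * of_int k) \<partial>lborel)
       = (\<integral>t. K (y - 2*pi * of_int k - t) * psi n f t \<partial>lborel)"
      by (simp add: algebra_simps)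
  qed
  also have "\<dots> = (\<integral>t. (\<Sum>k\<in>?S. K (y - 2*pi * of_int k - t) * psi n f t) \<partial>lborel)"
    by (rule Bochner_Integration.integral_sum[symmetric]) (use int_Kpsi[OF KI L1, of _ n 0] in simp)
  finally show ?thesis by (simp add: sum_distrib_right)
qed

lemma line_conv_exists_gfun:
  fixes K :: "real \<Rightarrow> real"
  assumes KI: "integrable lborel K" and L1: "L1_circle f"
  shows "line_conv_exists K (gfun n N f)"
  unfolding line_conv_exists_def gfun_def sum_distrib_left
  by (intro allI Bochner_Integration.integrable_sum int_Kpsi[OF KI L1])

lemma psi_shift: "psi n f (x - 2*pi * of_int k) = (if k = \<lfloor>x / (2*pi)\<rfloor> then phin n f x else 0)"
proof -
  have ph: "phin n f (x - 2*pi * of_int k) = phin n f x"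
    using cis_2pi_int[of x "-k"] by (simp add: phin_def)
  have "(0 \<le> x - 2*pi * of_int k \<and> x - 2*pi * of_int k < 2*pi) \<longleftrightarrow>
        (of_int k \<le> x / (2*pi) \<and> x / (2*pi) < of_int k + 1)"
    using pi_gt_zero by (auto simp: field_simps)
  moreover have "(k = \<lfloor>x / (2*pi)\<rfloor>) \<longleftrightarrow> (of_int k \<le> x / (2*pi) \<and> x / (2*pi) < of_int k + 1)"
    by (metis floor_eq_iff)
  ultimately show ?thesis by (simp add: psi_def indicator_def ph)
qed

lemma gfun_eq: "gfun n N f x =
   (if \<lfloor>x / (2*pi)\<rfloor> \<in> {-int n..<int N + int n} \<and> \<bar>f (cis x)\<bar> \<le> real n then f (cis x) else 0)"
  unfolding gfun_def psi_shift by (simp add: sum.delta' phin_def)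




lemma partial_tendsto:
  assumes "(g::int \<Rightarrow> real) summable_on UNIV"
  shows "(\<lambda>i::nat. \<Sum>k\<in>{-int i..int i}. g k) \<longlonglongrightarrow> infsum g UNIV"
proof -
  have lim: "(sum g \<longlongrightarrow> infsum g UNIV) (finite_subsets_at_top UNIV)"
    by (rule infsum_tendsto[OF assms])
  have fl: "filterlim (\<lambda>i::nat. {-int i..int i}) (finite_subsets_at_top UNIV) sequentially"
    unfolding filterlim_finite_subsets_at_top
  proof (intro allI impI)
    fix X :: "int set" assume X: "finite X \<and> X \<subseteq> UNIV"
    then have "\<forall>x\<in>abs ` X. x \<le> Max (abs ` X)" by simp
    then obtain m where m: "\<forall>x\<in>X. \<bar>x\<bar> \<le> m" by blast
    show "\<forall>\<^sub>F y in sequentially. finite {- int y..int y} \<and> X \<subseteq> {- int y..int y} \<and> {- int y..int y} \<subseteq> UNIV"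
      unfolding eventually_sequentially
    proof (rule exI[of _ "nat m"], intro allI impI conjI)
      fix i assume "nat m \<le> i"
      then show "X \<subseteq> {- int i..int i}" using m by force
    qed auto
  qed
  show ?thesis using filterlim_compose[OF lim fl] by (simp add: o_def)
qed

lemma wrapped_W': "wrapped_kernel K (cis y * cis (- t)) = W K (y - t)"
  using wrapped_W[of K y t] by (simp add: cis_inverse)

lemma approx:
  fixes K :: "real \<Rightarrow> real"
  assumes K0: "\<And>t. K t \<ge> 0" and KI: "integrable lborel K" and L1: "L1_circle f"
    and Fne: "circ_conv (wrapped_kernel K) f (cis u) \<noteq> 0"
  shows "\<exists>D. D \<longlonglongrightarrow> 0 \<and> (\<forall>n S. finite S \<longrightarrow> {-int n..int n} \<subseteq> S \<longrightarrow>
     \<bar>(\<integral>t. (\<Sum>k\<in>S. K (u - t + 2*pi * of_int k)) * psi n f t \<partial>lborel)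
        - 2*pi * circ_conv (wrapped_kernel K) f (cis u)\<bar> \<le> D n)"
proof -
  define E where "E = {0..<2*pi}"
  define V where "V t = W K (u - t)" for t
  define v where "v t = indicator E t * (V t * f (cis t))" for t
  define \<psi>0 where "\<psi>0 t = indicator E t * f (cis t)" for t
  define P where "P n t = (\<Sum>k\<in>{-int n..int n}. K (u - t + 2*pi * of_int k))" for n t
  define b where "b n t = \<bar>v t\<bar> * (if \<bar>\<psi>0 t\<bar> \<le> real n then 0 else 1) + \<bar>v t\<bar> - P n t * \<bar>\<psi>0 t\<bar>" for n t
  note Km[measurable] = K_meas[OF KI]
  note fm[measurable] = L1_meas[OF L1]
  note psim[measurable] = psi_meas[OF L1]
  have VW: "V t = (\<Sum>\<^sub>\<infinity>k::int. K (u - t + 2 * pi * of_int k))" for t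
    unfolding V_def W_def by simp
  have V0: "V t \<ge> 0" for t unfolding VW by (rule infsum_nonneg) (rule K0)
  \<comment> \<open>integrability from F \<noteq> 0\<close>
  have "(LINT t:{0..2*pi}|lborel. wrapped_kernel K (cis u * inverse (cis t)) * f (cis t)) \<noteq> 0"
    using Fne by (auto simp: circ_conv_def)
  then have nz: "(\<integral>t. indicator {0..2*pi} t * (V t * f (cis t)) \<partial>lborel) \<noteq> 0"
    by (simp add: set_lebesgue_integral_def V_def wrapped_W')
  then have I0: "integrable lborel (\<lambda>t. indicator {0..2*pi} t * (V t * f (cis t)))"
    using not_integrable_integral_eq by blast
  have ve: "v = (\<lambda>t. indicator {0..2*pi} t * (V t * f (cis t)) * indicator E t)"
    by (auto simp: v_def E_def indicator_def fun_eq_iff)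
  have Iv: "integrable lborel v"
    unfolding ve by (rule integrable_real_mult_indicator) (auto simp: E_def I0)
  have vm[measurable]: "v \<in> borel_measurable borel"
    using borel_measurable_integrable[OF Iv] by simp
  have \<psi>0m[measurable]: "\<psi>0 \<in> borel_measurable borel"
  proof -
    have "\<psi>0 = (\<lambda>t. indicator E t * (indicator {0..2*pi} t * f (cis t)))"
      by (auto simp: \<psi>0_def E_def indicator_def fun_eq_iff)
    then show ?thesis by (simp add: E_def)
  qed
  have Pm[measurable]: "P n \<in> borel_measurable borel" for n unfolding P_def by measurable
  have bm[measurable]: "b n \<in> borel_measurable borel" for n unfolding b_def by measurable
  have Fv: "2*pi * circ_conv (wrapped_kernel K) f (cis u) = (\<integral>t. v t \<partial>lborel)"
  proof -
    have "2*pi * circ_conv (wrapped_kernel K) f (cis u) = (\<integral>t. indicator {0..2*pi} t * (V t * f (cis t)) \<partial>lborel)"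
      by (simp add: circ_conv_def set_lebesgue_integral_def V_def wrapped_W')
    also have "\<dots> = (\<integral>t. v t \<partial>lborel)"
    proof (rule integral_cong_AE)
      show "(\<lambda>t. indicator {0..2*pi} t * (V t * f (cis t))) \<in> borel_measurable lborel"
        using borel_measurable_integrable[OF I0] .
      show "v \<in> borel_measurable lborel" by simp
      show "AE t in lborel. indicator {0..2*pi} t * (V t * f (cis t)) = v t"
        using AE_lborel_singleton[of "2*pi"] by eventually_elim (auto simp: v_def E_def indicator_def)
    qed
    finally show ?thesis .
  qed
  have sae: "AE t in lborel. t \<in> E \<longrightarrow> (\<lambda>k::int. K (u - t + 2*pi * of_int k)) summable_on UNIV"
    unfolding E_def by (rule summable_ae[OF K0 KI])
  have P0: "P n t \<ge> 0" for n t unfolding P_def by (auto intro: sum_nonneg K0)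
  have PV: "P n t \<le> V t" if "t \<in> E" "(\<lambda>k::int. K (u - t + 2*pi * of_int k)) summable_on UNIV" for n t
    unfolding P_def VW by (rule finite_sum_le_infsum[OF that(2)]) (auto intro: K0)
  have bbound: "AE t in lborel. norm (b n t) \<le> norm (2 * \<bar>v t\<bar>)" for n
    using sae
  proof eventually_elim
    case (elim t)
    show ?case
    proof (cases "t \<in> E")
      case False then show ?thesis by (simp add: b_def v_def \<psi>0_def)
    next
      case True
      with elim have sm: "(\<lambda>k::int. K (u - t + 2*pi * of_int k)) summable_on UNIV" by simp
      have av: "\<bar>v t\<bar> = V t * \<bar>f (cis t)\<bar>" "\<bar>\<psi>0 t\<bar> = \<bar>f (cis t)\<bar>"
        using True V0[of t] by (auto simp: v_def \<psi>0_def abs_mult)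
      have "P n t * \<bar>f (cis t)\<bar> \<le> V t * \<bar>f (cis t)\<bar>" by (rule mult_right_mono[OF PV[OF True sm]]) simp
      moreover have "0 \<le> P n t * \<bar>f (cis t)\<bar>" using P0 by simp
      ultimately show ?thesis unfolding b_def av by auto
    qed
  qed
  have Ib: "integrable lborel (b n)" for n
    by (rule Bochner_Integration.integrable_bound[where f="\<lambda>t. 2 * \<bar>v t\<bar>"]) (use Iv bbound in auto)
  define D where "D n = (\<integral>t. b n t \<partial>lborel)" for n
  have Iw: "integrable lborel (\<lambda>t. 2 * \<bar>v t\<bar>)" using Iv by auto
  have bnd2: "\<And>n. AE t in lborel. norm (b n t) \<le> 2 * \<bar>v t\<bar>" using bbound by simp
  have conv: "AE t in lborel. (\<lambda>n. b n t) \<longlonglongrightarrow> 0"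
      using sae
    proof eventually_elim
      case (elim t)
      show ?case
      proof (cases "t \<in> E")
        case False then show ?thesis by (simp add: b_def v_def \<psi>0_def)
      next
        case True
        with elim have sm: "(\<lambda>k::int. K (u - t + 2*pi * of_int k)) summable_on UNIV" by simp
        have PT: "(\<lambda>n. P n t) \<longlonglongrightarrow> V t" unfolding P_def VW by (rule partial_tendsto[OF sm])
        have av: "\<bar>v t\<bar> = V t * \<bar>\<psi>0 t\<bar>"
          using True V0[of t] by (auto simp: v_def \<psi>0_def abs_mult)
        have t1: "(\<lambda>n. \<bar>v t\<bar> * (if \<bar>\<psi>0 t\<bar> \<le> real n then 0 else 1)) \<longlonglongrightarrow> 0"
        proof (rule tendsto_eventually)
          obtain m :: nat where "\<bar>\<psi>0 t\<bar> \<le> real m" using real_arch_simple by blast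
          then show "\<forall>\<^sub>F n in sequentially. \<bar>v t\<bar> * (if \<bar>\<psi>0 t\<bar> \<le> real n then 0 else 1) = 0"
            unfolding eventually_sequentially
            by (intro exI[of _ m] allI impI) (auto dest: order_trans[OF _ of_nat_mono])
        qed
        have t2: "(\<lambda>n. \<bar>v t\<bar> - P n t * \<bar>\<psi>0 t\<bar>) \<longlonglongrightarrow> \<bar>v t\<bar> - V t * \<bar>\<psi>0 t\<bar>"
          by (intro tendsto_intros PT)
        have "(\<lambda>n. \<bar>v t\<bar> * (if \<bar>\<psi>0 t\<bar> \<le> real n then 0 else 1) + (\<bar>v t\<bar> - P n t * \<bar>\<psi>0 t\<bar>)) \<longlonglongrightarrow> 0 + (\<bar>v t\<bar> - V t * \<bar>\<psi>0 t\<bar>)"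
          by (rule tendsto_add[OF t1 t2])
        then show ?thesis unfolding b_def av by (simp add: add_diff_eq)
      qed
    qed
  have "(\<lambda>n. \<integral>t. b n t \<partial>lborel) \<longlonglongrightarrow> (integral\<^sup>L lborel (\<lambda>t::real. (0::real)))"
    by (rule integral_dominated_convergence[OF _ _ Iw conv bnd2]) simp_all
  then have Dlim: "D \<longlonglongrightarrow> 0" unfolding D_def by simp
  have main: "\<bar>(\<integral>t. (\<Sum>k\<in>S. K (u - t + 2*pi * of_int k)) * psi n f t \<partial>lborel)
        - 2*pi * circ_conv (wrapped_kernel K) f (cis u)\<bar> \<le> D n"
    if fS: "finite S" and nS: "{-int n..int n} \<subseteq> S" for n S
  proof -
    define a where "a t = (\<Sum>k\<in>S. K (u - t + 2*pi * of_int k)) * psi n f t" for t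
    have Ia: "integrable lborel a"
    proof -
      have "a = (\<lambda>t. \<Sum>k\<in>S. K ((u + 2*pi * of_int k) - t) * psi n f (t - 0))"
        by (auto simp: a_def fun_eq_iff sum_distrib_right sum_distrib_left algebra_simps)
      moreover have "integrable lborel (\<lambda>x. K (c - x) * psi n f x)" for c
        using int_Kpsi[OF KI L1, where b=0 and n=n and a=c] by simp
      ultimately show ?thesis by (auto intro!: Bochner_Integration.integrable_sum)
    qed
    have pw: "AE t in lborel. \<bar>a t - v t\<bar> \<le> b n t"
      using sae
    proof eventually_elim
      case (elim t)
      show ?case
      proof (cases "t \<in> E")
        case False then show ?thesis by (simp add: a_def b_def v_def \<psi>0_def psi_def E_def)
      next
        case True
        with elim have sm: "(\<lambda>k::int. K (u - t + 2*pi * of_int k)) summable_on UNIV" by simp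
        define \<sigma> where "\<sigma> = (\<Sum>k\<in>S. K (u - t + 2*pi * of_int k))"
        define ph where "ph = f (cis t)"
        have s1: "\<sigma> \<le> V t" unfolding \<sigma>_def VW by (rule finite_sum_le_infsum[OF sm fS]) (auto intro: K0)
        have s2: "P n t \<le> \<sigma>" unfolding \<sigma>_def P_def by (rule sum_mono2[OF fS nS]) (auto intro: K0)
        have av: "\<bar>v t\<bar> = V t * \<bar>ph\<bar>" "\<bar>\<psi>0 t\<bar> = \<bar>ph\<bar>" "v t = V t * ph"
          using True V0[of t] by (auto simp: v_def \<psi>0_def abs_mult ph_def)
        have ps: "psi n f t = (if \<bar>ph\<bar> \<le> real n then ph else 0)"
          using True by (simp add: psi_def phin_def E_def ph_def)
        have m1: "(V t - \<sigma>) * \<bar>ph\<bar> \<le> (V t - P n t) * \<bar>ph\<bar>" by (rule mult_right_mono) (use s2 in auto)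
        have m2: "0 \<le> (V t - P n t) * \<bar>ph\<bar>" using s1 s2 by simp
        have m3: "0 \<le> V t * \<bar>ph\<bar>" using V0[of t] by simp
        show ?thesis
        proof (cases "\<bar>ph\<bar> \<le> real n")
          case True
          have "\<bar>a t - v t\<bar> = \<bar>(\<sigma> - V t) * ph\<bar>" unfolding a_def \<sigma>_def[symmetric] av ps using True
            by (simp add: algebra_simps)
          also have "\<dots> = (V t - \<sigma>) * \<bar>ph\<bar>" using s1 by (simp add: abs_mult)
          finally show ?thesis using m1 True unfolding b_def av by (simp add: algebra_simps)
        next
          case False
          have "\<bar>a t - v t\<bar> = V t * \<bar>ph\<bar>" unfolding a_def \<sigma>_def[symmetric] av ps using False V0[of t]
            by (simp add: abs_mult)
          then show ?thesis using m2 False unfolding b_def av by (simp add: algebra_simps)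
        qed
      qed
    qed
    have "\<bar>(\<integral>t. a t \<partial>lborel) - (\<integral>t. v t \<partial>lborel)\<bar> = \<bar>\<integral>t. (a t - v t) \<partial>lborel\<bar>"
      using Ia Iv by simp
    also have "\<dots> \<le> (\<integral>t. \<bar>a t - v t\<bar> \<partial>lborel)"
      by (rule integral_abs_bound)
    also have "\<dots> \<le> (\<integral>t. b n t \<partial>lborel)"
      by (rule integral_mono_AE) (use Ia Iv Ib pw in auto)
    finally show ?thesis unfolding D_def Fv a_def .
  qed
  show ?thesis using Dlim main by blast
qed




lemma sign_changes_nonzero: "\<forall>x\<in>set xs. x \<noteq> 0 \<Longrightarrow> sign_changes xs = sc xs"
  unfolding sign_changes_sc by (simp add: filter_id_conv)

lemma filter_zero_sc:
  assumes "\<forall>x\<in>set ts. \<not> Q x \<longrightarrow> g x = 0"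
  shows "sign_changes (map g (filter Q ts)) = sign_changes (map g ts)"
proof -
  have "filter (\<lambda>x. x \<noteq> 0) (map g (filter Q ts)) = filter (\<lambda>x. x \<noteq> 0) (map g ts)"
    using assms by (induction ts) auto
  then show ?thesis unfolding sign_changes_sc by simp
qed

lemma list_all2_mapI: "(\<forall>x\<in>set xs. P (f x) (g x)) \<Longrightarrow> list_all2 P (map f xs) (map g xs)"
  by (induction xs) auto

lemma sign_pos: "\<bar>a - b\<bar> < \<bar>b\<bar> \<Longrightarrow> a * b > (0::real)"
  by (cases "b > 0") (auto simp: zero_less_mult_iff abs_if split: if_splits)

lemma key:
  fixes K :: "real \<Rightarrow> real" and f :: "complex \<Rightarrow> real"
  assumes K0: "\<And>t. K t \<ge> 0" and KI: "integrable lborel K"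
    and vd: "variation_diminishing_line K" and L1: "L1_circle f"
    and cb: "\<forall>ts. sorted_wrt (<) ts \<longrightarrow> (ts \<noteq> [] \<longrightarrow> last ts < hd ts + 2 * pi) \<longrightarrow>
     cyc_sign_changes (map (\<lambda>t. f (cis t)) ts) \<le> ce"
    and ts: "sorted_wrt (<) ts" "ts \<noteq> [] \<longrightarrow> last ts < hd ts + 2 * pi"
  shows "cyc_sign_changes (map (\<lambda>t. circ_conv (wrapped_kernel K) f (cis t)) ts) \<le> ce + 1"
proof (rule ccontr)
  define F where "F = circ_conv (wrapped_kernel K) f"
  define c where "c = cyc_sign_changes (map (\<lambda>t. F (cis t)) ts)"
  assume "\<not> ?thesis"
  then have cbig: "c \<ge> ce + 2" unfolding c_def F_def by simp
  have ex: "\<exists>x\<in>set (map (\<lambda>t. F (cis t)) ts). x \<noteq> 0"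
  proof (rule ccontr)
    assume "\<not> ?thesis"
    then have "c = 0" unfolding c_def cyc_sign_changes_def by auto
    then show False using cbig by simp
  qed
  define us where "us = filter (\<lambda>t. F (cis t) \<noteq> 0) ts"
  define zs where "zs = map (\<lambda>t. F (cis t)) us"
  have zsf: "zs = filter (\<lambda>x. x \<noteq> 0) (map (\<lambda>t. F (cis t)) ts)"
    unfolding zs_def us_def by (simp add: filter_map o_def)
  have c_eq: "c = sc (zs @ [hd zs])" unfolding c_def cyc_formula[OF ex] zsf ..
  have zne: "zs \<noteq> []" using ex unfolding zsf by (auto simp: filter_empty_conv)
  then have une: "us \<noteq> []" unfolding zs_def by simp
  have znz: "\<forall>z\<in>set zs. z \<noteq> 0" unfolding zsf by simp
  have us_sorted: "sorted_wrt (<) us" unfolding us_def using ts(1) by (rule sorted_wrt_filter)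
  have us_sub: "set us \<subseteq> set ts" unfolding us_def by auto
  have tne: "ts \<noteq> []" using une us_sub by auto
  have us_span: "last us < hd us + 2*pi"
  proof -
    have "last us \<le> last ts" using sorted_bnd[OF ts(1)] us_sub last_in_set[OF une] by blast
    moreover have "hd ts \<le> hd us" using sorted_bnd[OF ts(1)] us_sub hd_in_set[OF une] by blast
    ultimately show ?thesis using ts(2) tne by linarith
  qed
  have Fnz: "F (cis u) \<noteq> 0" if "u \<in> set us" for u using that unfolding us_def by simp
  have "\<forall>u\<in>set us. \<exists>D. D \<longlonglongrightarrow> 0 \<and> (\<forall>n S. finite S \<longrightarrow> {-int n..int n} \<subseteq> S \<longrightarrow>
     \<bar>(\<integral>t. (\<Sum>k\<in>S. K (u - t + 2*pi * of_int k)) * psi n f t \<partial>lborel) - 2*pi * F (cis u)\<bar> \<le> D n)"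
    using approx[OF K0 KI L1] Fnz unfolding F_def by blast
  from bchoice[OF this] obtain Dd where Dd0: "\<forall>u\<in>set us. Dd u \<longlonglongrightarrow> 0 \<and> (\<forall>n S. finite S \<longrightarrow> {-int n..int n} \<subseteq> S \<longrightarrow>
     \<bar>(\<integral>t. (\<Sum>k\<in>S. K (u - t + 2*pi * of_int k)) * psi n f t \<partial>lborel) - 2*pi * F (cis u)\<bar> \<le> Dd u n)"
    by blast
  have Dd1: "\<And>u. u \<in> set us \<Longrightarrow> Dd u \<longlonglongrightarrow> 0" using Dd0 by blast
  have Dd2: "\<And>u n S. u \<in> set us \<Longrightarrow> finite S \<Longrightarrow> {-int n..int n} \<subseteq> S \<Longrightarrow>
     \<bar>(\<integral>t. (\<Sum>k\<in>S. K (u - t + 2*pi * of_int k)) * psi n f t \<partial>lborel) - 2*pi * F (cis u)\<bar> \<le> Dd u n"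
    using Dd0 by blast
  have "\<forall>u\<in>set us. \<forall>\<^sub>F n in sequentially. Dd u n < \<bar>2*pi * F (cis u)\<bar>"
  proof
    fix u assume u: "u \<in> set us"
    have "0 < \<bar>2*pi * F (cis u)\<bar>" using Fnz[OF u] by simp
    then show "\<forall>\<^sub>F n in sequentially. Dd u n < \<bar>2*pi * F (cis u)\<bar>"
      using order_tendstoD(2)[OF Dd1[OF u]] by blast
  qed
  then have "\<forall>\<^sub>F n in sequentially. \<forall>u\<in>set us. Dd u n < \<bar>2*pi * F (cis u)\<bar>"
    by (simp add: eventually_ball_finite)
  then obtain n where nD: "\<And>u. u \<in> set us \<Longrightarrow> Dd u n < \<bar>2*pi * F (cis u)\<bar>"
    unfolding eventually_sequentially by blast
  define N where "N = 2 * n * (ce + 1) + 2"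
  define g where "g = gfun n N f"
  define L where "L = line_conv K g"
  define Y where "Y = rep us N"
  have signY: "L y * F (cis y) > 0" if yY: "y \<in> set Y" for y
  proof -
    obtain u j where u: "u \<in> set us" "j < N" "y = u + 2*pi*real j"
      using set_rep[THEN iffD1, OF yY[unfolded Y_def]] by blast
    define S' where "S' = {-int n..<int N + int n}"
    define Sj where "Sj = (\<lambda>k. int j - k) ` S'"
    have inj: "inj_on (\<lambda>k. int j - k) S'" by (auto simp: inj_on_def)
    have Ly: "L y = (\<integral>t. (\<Sum>k\<in>Sj. K (u - t + 2*pi * of_int k)) * psi n f t \<partial>lborel)"
    proof -
      have "L y = (\<integral>t. (\<Sum>k\<in>S'. K (y - 2*pi * of_int k - t)) * psi n f t \<partial>lborel)"
        unfolding L_def g_def S'_def by (rule line_conv_gfun[OF KI L1])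
      also have "\<dots> = (\<integral>t. (\<Sum>k\<in>Sj. K (u - t + 2*pi * of_int k)) * psi n f t \<partial>lborel)"
      proof -
        have "(\<Sum>k\<in>S'. K (y - 2*pi * of_int k - t)) = (\<Sum>k\<in>Sj. K (u - t + 2*pi * of_int k))" for t
          unfolding Sj_def sum.reindex[OF inj] u(3) by (rule sum.cong) (auto simp: algebra_simps)
        then show ?thesis by simp
      qed
      finally show ?thesis .
    qed
    have fin: "finite Sj" unfolding Sj_def S'_def by simp
    have sub: "{-int n..int n} \<subseteq> Sj"
    proof
      fix k assume k: "k \<in> {-int n..int n}"
      have "int j - k \<in> S'" using k u(2) unfolding S'_def by auto
      moreover have "k = int j - (int j - k)" by simp
      ultimately show "k \<in> Sj" unfolding Sj_def by blast
    qed
    have "\<bar>L y - 2*pi * F (cis u)\<bar> < \<bar>2*pi * F (cis u)\<bar>"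
      using Dd2[OF u(1) fin sub] nD[OF u(1)] unfolding Ly by linarith
    then have "L y * (2*pi * F (cis u)) > 0" by (rule sign_pos)
    moreover have "F (cis y) = F (cis u)" unfolding u(3) cis_2pi_nat ..
    ultimately show ?thesis using pi_gt_zero by (auto simp: zero_less_mult_iff mult_less_0_iff)
  qed
  have Ysorted: "sorted_wrt (<) Y" unfolding Y_def by (rule rep_sorted[OF us_sorted une us_span])
  have mapFY: "map (\<lambda>y. F (cis y)) Y = concat (replicate N zs)"
    unfolding Y_def zs_def by (rule map_rep) (simp add: cis_2pi_nat)
  have "sign_changes (map L Y) = sc (map L Y)"
    using signY by (intro sign_changes_nonzero) (fastforce)
  also have "\<dots> = sc (map (\<lambda>y. F (cis y)) Y)"
    by (rule sc_same_sign) (rule list_all2_mapI, use signY in auto)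
  finally have lowY: "sign_changes (map L Y) = sc (concat (replicate N zs))" unfolding mapFY .
  define bb where "bb = (if last zs * hd zs < 0 then 1 else (0::nat))"
  have cdec: "c = sc zs + bb" unfolding c_eq bb_def using sc_append[OF zne, of "[hd zs]"] by simp
  obtain N' where N': "N = Suc N'" unfolding N_def by simp
  have "sc (concat (replicate N zs)) + bb = N * c"
    unfolding N' cdec bb_def by (rule sc_replicate[OF zne])
  then have low: "N * c \<le> sign_changes (map L Y) + 1" unfolding lowY bb_def by (auto split: if_splits)
  have "enat (sign_changes (map L Y)) \<le> sign_changes_fun L"
    unfolding sign_changes_fun_def by (rule SUP_upper) (simp add: Ysorted)
  also have "\<dots> \<le> sign_changes_fun g"
    using vd line_conv_exists_gfun[OF KI L1] unfolding variation_diminishing_line_def L_def g_def by blast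
  also have "\<dots> \<le> enat ((N + 2*n) * (ce + 1))"
    unfolding sign_changes_fun_def
  proof (rule SUP_least)
    fix ts' :: "real list" assume "ts' \<in> {ts. sorted_wrt (<) ts}"
    then have s': "sorted_wrt (<) ts'" by simp
    define Q where "Q x = (\<lfloor>x / (2*pi)\<rfloor> \<in> {-int n..<int N + int n})" for x
    define P where "P x = (Q x \<and> \<bar>f (cis x)\<bar> \<le> real n)" for x
    have geq: "g = (\<lambda>x. if P x then f (cis x) else 0)"
      unfolding g_def P_def Q_def by (rule ext) (rule gfun_eq)
    have "sign_changes (map g ts') = sign_changes (map g (filter Q ts'))"
      by (rule filter_zero_sc[symmetric]) (auto simp: geq P_def)
    also have "\<dots> \<le> (N + 2*n) * (ce + 1)"
      unfolding geq
    proof (rule block[OF cb])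
      show "sorted_wrt (<) (filter Q ts')" using s' by (rule sorted_wrt_filter)
      show "\<forall>t\<in>set (filter Q ts'). - (2*pi*real n) \<le> t \<and> t < - (2*pi*real n) + 2*pi*real (N + 2*n)"
      proof
        fix t assume "t \<in> set (filter Q ts')"
        then have q: "- int n \<le> \<lfloor>t / (2*pi)\<rfloor>" "\<lfloor>t / (2*pi)\<rfloor> < int N + int n" unfolding Q_def by auto
        have fc: "real_of_int \<lfloor>t / (2*pi)\<rfloor> \<le> t / (2*pi)" "t / (2*pi) < real_of_int (\<lfloor>t / (2*pi)\<rfloor> + 1)"
          using floor_correct[of "t / (2*pi)"] by auto
        have "real_of_int (- int n) \<le> real_of_int \<lfloor>t / (2*pi)\<rfloor>" using q(1) by (simp only: of_int_le_iff)
        then have "- real n \<le> real_of_int \<lfloor>t / (2*pi)\<rfloor>" by simp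
        then have lo: "- real n \<le> t / (2*pi)" using fc(1) by linarith
        have "real_of_int (\<lfloor>t / (2*pi)\<rfloor> + 1) \<le> real_of_int (int N + int n)"
          using q(2) by (simp only: of_int_le_iff)
        then have "real_of_int (\<lfloor>t / (2*pi)\<rfloor> + 1) \<le> real N + real n" by simp
        then have hi: "t / (2*pi) < real N + real n" using fc(2) by linarith
        note lo hi
        then show "- (2*pi*real n) \<le> t \<and> t < - (2*pi*real n) + 2*pi*real (N + 2*n)"
          using pi_gt_zero by (auto simp: field_simps)
      qed
    qed
    finally show "enat (sign_changes (map g ts')) \<le> enat ((N + 2*n) * (ce + 1))" by simp
  qed
  finally have "sign_changes (map L Y) \<le> (N + 2*n) * (ce + 1)" by simp
  with low have A: "N * c \<le> (N + 2*n) * (ce + 1) + 1" by linarith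
  have "N * (ce + 2) \<le> N * c" by (rule mult_le_mono2[OF cbig])
  with A have B: "N * (ce + 2) \<le> (N + 2*n) * (ce + 1) + 1" by linarith
  have e1: "N * (ce + 2) = N * ce + 2 * N" by (simp add: algebra_simps)
  have e2: "(N + 2*n) * (ce + 1) + 1 = N * ce + N + 2*n*(ce+1) + 1" by (simp add: algebra_simps)
  from B have "N \<le> 2*n*(ce+1) + 1" unfolding e1 e2 by linarith
  then show False unfolding N_def by simp
qed




lemma par_aux:
  fixes x c :: nat
  assumes "x \<le> 2 * (c div 2) + 1" "even x"
  shows "x \<le> c"
proof -
  obtain m where x: "x = 2 * m" using assms(2) by (rule evenE)
  then have "m \<le> c div 2" using assms(1) by linarith
  then have "2 * m \<le> 2 * (c div 2)" by simp
  moreover have "2 * (c div 2) \<le> c" by simp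
  ultimately show ?thesis unfolding x by linarith
qed

theorem theorem7:
  fixes K :: "real \<Rightarrow> real"
  assumes "mean_continuous_kernel K"
    and "variation_diminishing_line K"
  shows "\<forall>f. L1_circle f \<longrightarrow>
     cyc_sign_changes_fun (circ_conv (wrapped_kernel K) f) \<le> cyc_sign_changes_fun f"
proof (intro allI impI)
  fix f :: "complex \<Rightarrow> real" assume L1: "L1_circle f"
  have K0: "\<And>t. K t \<ge> 0" and KI: "integrable lborel K"
    using assms(1) unfolding mean_continuous_kernel_def by auto
  show "cyc_sign_changes_fun (circ_conv (wrapped_kernel K) f) \<le> cyc_sign_changes_fun f"
  proof (cases "cyc_sign_changes_fun f")
    case infinity then show ?thesis by simp
  next
    case (enat c0)
    define ce where "ce = 2 * (c0 div 2)"
    have cb: "\<forall>ts. sorted_wrt (<) ts \<longrightarrow> (ts \<noteq> [] \<longrightarrow> last ts < hd ts + 2 * pi) \<longrightarrow>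
       cyc_sign_changes (map (\<lambda>t. f (cis t)) ts) \<le> ce"
    proof (intro allI impI)
      fix ts :: "real list" assume s: "sorted_wrt (<) ts" and sp: "ts \<noteq> [] \<longrightarrow> last ts < hd ts + 2 * pi"
      have "enat (cyc_sign_changes (map (\<lambda>t. f (cis t)) ts)) \<le> cyc_sign_changes_fun f"
        by (rule cyc_fun_ge[OF s]) (use sp in auto)
      then have le: "cyc_sign_changes (map (\<lambda>t. f (cis t)) ts) \<le> c0" using enat by simp
      obtain m where m: "cyc_sign_changes (map (\<lambda>t. f (cis t)) ts) = 2 * m"
        using cyc_even by (metis evenE)
      have "m = (2 * m) div 2" by simp
      also have "\<dots> \<le> c0 div 2" using le m by (metis div_le_mono)
      finally show "cyc_sign_changes (map (\<lambda>t. f (cis t)) ts) \<le> ce" unfolding ce_def m by simp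
    qed
    have "cyc_sign_changes_fun (circ_conv (wrapped_kernel K) f) \<le> enat c0"
      unfolding cyc_sign_changes_fun_def[of "circ_conv (wrapped_kernel K) f"]
    proof (rule SUP_least)
      fix ts assume "ts \<in> {ts. sorted_wrt (<) ts \<and> (ts \<noteq> [] \<longrightarrow> last ts < hd ts + 2 * pi)}"
      then have s: "sorted_wrt (<) ts" and sp: "ts \<noteq> [] \<longrightarrow> last ts < hd ts + 2 * pi" by auto
      have k: "cyc_sign_changes (map (\<lambda>t. circ_conv (wrapped_kernel K) f (cis t)) ts) \<le> ce + 1"
        by (rule key[OF K0 KI assms(2) L1 cb s sp])
      have ev: "even (cyc_sign_changes (map (\<lambda>t. circ_conv (wrapped_kernel K) f (cis t)) ts))"
        by (rule cyc_even)
      have "cyc_sign_changes (map (\<lambda>t. circ_conv (wrapped_kernel K) f (cis t)) ts) \<le> c0"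
        using par_aux k ev unfolding ce_def by blast
      then show "enat (cyc_sign_changes (map (\<lambda>t. circ_conv (wrapped_kernel K) f (cis t)) ts)) \<le> enat c0"
        by simp
    qed
    then show ?thesis using enat by simp
  qed
qed


end
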